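(* For every $n\ge1$ and every $\lambda>0$, $$F_n(\lambda;\mathbf e_2):=\sum_{p\ge0}u_{n,p}(\mathbf e_2)\lambda^p=\lambda^{n/2}\Big[\mathrm{He}_n\Big(\sqrt\lambda+\tfrac{n}{\sqrt\lambda}\Big)-\tfrac{n}{\sqrt\lambda}\,\mathrm{He}_{n-1}\Big(\sqrt\lambda+\tfrac{n}{\sqrt\lambda}\Big)\Big].$$ Equivalently, $u_{n,p}(\mathbf e_2)=\frac{1}{p!}\sum_{q=0}^p\big(-\tfrac12\big)^q\binom{p}{q}\binom{n-1}{p+q-1}n^{n-p-q}(p+q)!$.
   Context: $u_{n,p}(\mathbf e_2)$ is the number of spanning forests of the complete graph $K_n$ on $n$ labeled vertices having exactly $p$ connected components (trees, isolated vertices included). $\mathrm{He}_s$ are the probabilists' Hermite polynomials, defined by $e^{xz-z^2/2}=\sum_{s\ge0}\mathrm{He}_s(x)z^s/s!$. *)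

theory Defs
  imports "HOL-Computational_Algebra.Formal_Power_Series" Complex_Main
begin

definition Kn_edges :: "nat \<Rightarrow> nat set set" where
  "Kn_edges n = {e. \<exists>a b. a < n \<and> b < n \<and> a \<noteq> b \<and> e = {a, b}}"

definition edge_rel :: "nat set set \<Rightarrow> (nat \<times> nat) set" where
  "edge_rel F = {(a, b). {a, b} \<in> F}"

definition is_forest :: "nat set set \<Rightarrow> bool" where
  "is_forest F \<longleftrightarrow> (\<forall>e\<in>F. \<forall>a b. e = {a, b} \<longrightarrow> (a, b) \<notin> (edge_rel (F - {e}))\<^sup>*)"

text \<open>Connected components of the spanning subgraph ({0..<n}, F) (isolated vertices included).\<close>
definition components :: "nat \<Rightarrow> nat set set \<Rightarrow> nat set set" where
  "components n F = {0..<n} // {(a, b). a < n \<and> b < n \<and> (a, b) \<in> (edge_rel F)\<^sup>*}"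

definition u_e2 :: "nat \<Rightarrow> nat \<Rightarrow> nat" where
  "u_e2 n p = card {F. F \<subseteq> Kn_edges n \<and> is_forest F \<and> card (components n F) = p}"

text \<open>Probabilists' Hermite polynomials via the generating function
  exp(x z - z^2/2) = sum_s He_s(x) z^s / s!, as a formal power series in z.\<close>
definition hermiteHe :: "nat \<Rightarrow> real \<Rightarrow> real" where
  "hermiteHe s x = fact s * fps_nth
     (fps_compose (fps_exp 1) (fps_const x * fps_X - fps_const (1/2) * fps_X ^ 2)) s"

end

theory Submission
  imports Defs
begin

unbundle fps_syntax

definition abelA :: "nat \<Rightarrow> real \<Rightarrow> real" where
  "abelA m x = (if m = 0 then 1 else x * (x + real m) ^ (m - 1))"

lemma abelA_0 [simp]: "abelA 0 x = 1" by (simp add: abelA_def)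
lemma abelA_at0: "abelA m 0 = (if m = 0 then 1 else 0)" by (simp add: abelA_def)

lemma abelA_deriv:
  "(abelA k has_real_derivative (real k * abelA (k - 1) (x + 1))) (at x)"
proof (cases k)
  case 0
  have "abelA k = (\<lambda>x. 1)" using 0 by (auto simp: abelA_def)
  then show ?thesis using 0 by simp
next
  case (Suc j)
  show ?thesis
  proof (cases j)
    case 0
    have "abelA k = (\<lambda>x. x)" using Suc 0 by (auto simp: abelA_def)
    then show ?thesis using Suc 0 by (auto intro!: derivative_eq_intros)
  next
    case (Suc i)
    have e: "abelA k = (\<lambda>x. x * (x + real k) ^ (Suc i))" using \<open>k = Suc j\<close> Suc
      by (auto simp: abelA_def)
    have "((\<lambda>x. x * (x + real k) ^ (Suc i)) has_real_derivative
          1 * (x + real k) ^ Suc i + x * (real (Suc i) * (x + real k) ^ i * 1)) (at x)"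
      by (intro derivative_eq_intros) auto
    moreover have "1 * (x + real k) ^ Suc i + x * (real (Suc i) * (x + real k) ^ i * 1)
        = real k * abelA (k - 1) (x + 1)"
      using \<open>k = Suc j\<close> Suc by (simp add: abelA_def algebra_simps)
    ultimately show ?thesis using e by simp
  qed
qed

lemma abel_identity:
  "(\<Sum>k\<le>m. real (m choose k) * abelA k x * abelA (m - k) y) = abelA m (x + y)"
proof (induction m arbitrary: x y)
  case 0
  then show ?case by simp
next
  case (Suc m)
  define D where "D = (\<lambda>x. (\<Sum>k\<le>Suc m. real (Suc m choose k) * abelA k x * abelA (Suc m - k) y)
      - abelA (Suc m) (x + y))"
  have der: "(D has_real_derivative 0) (at z)" for z
  proof -
    have d1: "((\<lambda>x. \<Sum>k\<le>Suc m. real (Suc m choose k) * abelA k x * abelA (Suc m - k) y)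
        has_real_derivative (\<Sum>k\<le>Suc m. real (Suc m choose k) * (real k * abelA (k - 1) (z + 1)) * abelA (Suc m - k) y)) (at z)"
      by (intro DERIV_sum DERIV_cmult DERIV_cmult_right abelA_deriv) 
    have d2: "((\<lambda>x. abelA (Suc m) (x + y)) has_real_derivative real (Suc m) * abelA m (z + y + 1)) (at z)"
    proof -
      have "((\<lambda>x. abelA (Suc m) (x + y)) has_real_derivative real (Suc m) * abelA m (z + y + 1) * 1) (at z)"
        by (rule DERIV_chain2[where f="abelA (Suc m)" and g="\<lambda>x. x+y"])
          (use abelA_deriv[of "Suc m" "z+y"] in simp, auto intro!: derivative_eq_intros)
      then show ?thesis by simp
    qed
    have "(\<Sum>k\<le>Suc m. real (Suc m choose k) * (real k * abelA (k - 1) (z + 1)) * abelA (Suc m - k) y)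
        = (\<Sum>k\<le>m. real (Suc m choose Suc k) * (real (Suc k) * abelA k (z + 1)) * abelA (m - k) y)"
      by (simp only: sum.atMost_Suc_shift) (simp del: binomial_Suc_Suc)
    also have "\<dots> = real (Suc m) * (\<Sum>k\<le>m. real (m choose k) * abelA k (z + 1) * abelA (m - k) y)"
      unfolding sum_distrib_left
    proof (intro sum.cong refl)
      fix k assume "k \<in> {..m}"
      have "real (Suc m choose Suc k) * real (Suc k) = real (Suc m) * real (m choose k)"
        by (metis Suc_times_binomial mult.commute of_nat_mult)
      then show "real (Suc m choose Suc k) * (real (Suc k) * abelA k (z + 1)) * abelA (m - k) y =
         real (Suc m) * (real (m choose k) * abelA k (z + 1) * abelA (m - k) y)"
        by (metis (no_types, lifting) mult.assoc mult.left_commute)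
    qed
    also have "\<dots> = real (Suc m) * abelA m (z + y + 1)"
      using Suc.IH[of "z+1" y] by (simp add: add_ac)
    finally show ?thesis unfolding D_def using DERIV_diff[OF d1 d2] by simp
  qed
  have "D x = D 0" using DERIV_isconst_all[of D x 0] der by blast
  moreover have "D 0 = 0"
  proof -
    have "(\<Sum>k\<le>Suc m. real (Suc m choose k) * abelA k 0 * abelA (Suc m - k) y) = abelA (Suc m) y"
      by (simp add: abelA_at0 sum.atMost_Suc_shift del: sum.atMost_Suc)
    then show ?thesis by (simp add: D_def)
  qed
  ultimately show ?case by (simp add: D_def)
qed

definition Ef :: "real \<Rightarrow> real fps" where
  "Ef x = Abs_fps (\<lambda>m. abelA m x / fact m)"

lemma Ef_nth [simp]: "Ef x $ m = abelA m x / fact m"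
  by (simp add: Ef_def)

lemma Ef_mult: "Ef x * Ef y = Ef (x + y)"
proof (rule fps_ext)
  fix n
  have "(Ef x * Ef y) $ n = (\<Sum>i=0..n. abelA i x / fact i * (abelA (n - i) y / fact (n - i)))"
    by (simp add: fps_mult_nth)
  also have "\<dots> = (\<Sum>i\<le>n. real (n choose i) * abelA i x * abelA (n - i) y) / fact n"
    unfolding sum_divide_distrib atMost_atLeast0
  proof (intro sum.cong refl)
    fix i assume "i \<in> {0..n}"
    then have "i \<le> n" by simp
    then show "abelA i x / fact i * (abelA (n - i) y / fact (n - i)) =
        real (n choose i) * abelA i x * abelA (n - i) y / fact n"
      by (simp add: binomial_fact field_simps)
  qed
  also have "\<dots> = Ef (x + y) $ n" by (simp add: abel_identity)
  finally show "(Ef x * Ef y) $ n = Ef (x + y) $ n" .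
qed

lemma Ef_0: "Ef 0 = 1"
  by (rule fps_ext) (simp add: abelA_at0)

lemma Ef_power: "Ef 1 ^ j = Ef (real j)"
  by (induction j) (simp_all add: Ef_0 Ef_mult add_ac)

definition Rf :: "real fps" where "Rf = fps_X * Ef 1"

lemma Rf_power: "Rf ^ j = fps_X ^ j * Ef (real j)"
  by (simp add: Rf_def power_mult_distrib Ef_power)

lemma Rf_power_nth: "(Rf ^ j) $ n = (if n < j then 0 else abelA (n - j) (real j) / fact (n - j))"
  by (simp add: Rf_power fps_X_power_mult_nth)

lemma Rf_nth: "fact k * Rf $ k = real k ^ (k - 2) * real k"
proof -
  have "Rf $ k = (Rf ^ 1) $ k" by simp
  also have "\<dots> = (if k < 1 then 0 else abelA (k - 1) 1 / fact (k - 1))"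
    by (simp only: Rf_power_nth) simp
  finally have r: "Rf $ k = (if k < 1 then 0 else abelA (k - 1) 1 / fact (k - 1))" .
  show ?thesis
  proof (cases k)
    case 0 then show ?thesis using r by simp
  next
    case (Suc j)
    then show ?thesis
    proof (cases j)
      case 0 then show ?thesis using Suc r by simp
    next
      case (Suc i)
      have a: "abelA (k - 1) 1 = real k ^ (k - 2)"
        using \<open>k = Suc j\<close> Suc by (simp add: abelA_def add_ac)
      have f: "fact k = real k * fact (k - 1)"
        using \<open>k = Suc j\<close> by (simp add: fact_Suc)
      show ?thesis using \<open>k = Suc j\<close> r a f by simp
    qed
  qed
qed

definition Tf :: "real fps" where "Tf = Rf - fps_const (1/2) * Rf ^ 2"

lemma Tf_nth0 [simp]: "Tf $ 0 = 0"
proof -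
  have "(Rf ^ 2) $ 0 = 0" "(Rf ^ 1) $ 0 = 0" by (simp_all only: Rf_power_nth) simp_all
  then show ?thesis by (simp add: Tf_def)
qed

lemma Tf_nth: assumes "k \<ge> 1" shows "fact k * Tf $ k = real k ^ (k - 2)"
proof -
  have r1: "fact k * Rf $ k = real k ^ (k - 2) * real k" by (rule Rf_nth)
  have r2: "(Rf ^ 2) $ k = (if k < 2 then 0 else abelA (k - 2) 2 / fact (k - 2))"
    by (simp add: Rf_power_nth)
  have "fact k * Tf $ k = fact k * Rf $ k - fact k * (Rf ^ 2) $ k / 2"
    by (simp add: Tf_def algebra_simps)
  also have "\<dots> = real k ^ (k - 2)"
  proof (cases "k < 2")
    case True
    then have "k = 1" using assms by simp
    then show ?thesis using r1 r2 by simp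
  next
    case False
    then obtain i where i: "k = i + 2" by (metis add.commute le_Suc_ex not_less)
    show ?thesis
    proof (cases i)
      case 0
      then show ?thesis using r1 r2 i by (simp add: numeral_2_eq_2)
    next
      case (Suc j)
      have f: "fact k = real k * real (k - 1) * fact (k - 2)"
        using i Suc by (simp add: fact_Suc algebra_simps numeral_2_eq_2)
      have "fact k * (Rf ^ 2) $ k / 2 = real k * real (k - 1) * real k ^ (k - 3)"
        using i Suc r2 by (simp add: abelA_def f numeral_2_eq_2 numeral_3_eq_3)
      moreover have "real k ^ (k - 2) * real k = real k * real k * real k ^ (k - 3)"
        "real k ^ (k - 2) = real k * real k ^ (k - 3)"
        using i Suc by (simp_all add: numeral_2_eq_2 numeral_3_eq_3)
      moreover have "real (k - 1) = real k - 1" using i by simp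
      ultimately show ?thesis using r1 by (simp add: algebra_simps)
    qed
  qed
  finally show ?thesis .
qed

lemma X_deriv_nth: "(fps_X * fps_deriv f) $ i = of_nat i * f $ i"
  by (cases i) (simp_all add: fps_deriv_nth)

lemma conv_deriv:
  fixes f g :: "real fps"
  shows "(\<Sum>k=0..n. real k * f $ k * g $ (n - k)) = (fps_X * fps_deriv f * g) $ n"
  by (simp only: fps_mult_nth[of "fps_X * fps_deriv f" g] X_deriv_nth)

lemma cay_sum:
  assumes "n \<ge> 2"
  shows "(\<Sum>k=1..n. real ((n - 1) choose (k - 1)) * (fact k * Rf $ k) * (fact (n - k) * Rf $ (n - k)))
         = real (n - 1) * real n ^ (n - 2)"
proof -
  have "(\<Sum>k=1..n. real ((n - 1) choose (k - 1)) * (fact k * Rf $ k) * (fact (n - k) * Rf $ (n - k)))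
      = (\<Sum>k=1..n. fact (n - 1) * (real k * Rf $ k * Rf $ (n - k)))"
  proof (intro sum.cong refl)
    fix k assume k: "k \<in> {1..n}"
    then obtain j where j: "k = Suc j" by (cases k) auto
    have "real ((n - 1) choose j) * fact j * fact (n - 1 - j) = fact (n - 1)"
      using k j by (simp add: binomial_fact)
    moreover have "fact k = real k * fact j" using j by (simp add: fact_Suc)
    moreover have "n - k = n - 1 - j" using j by simp
    ultimately show "real ((n - 1) choose (k - 1)) * (fact k * Rf $ k) * (fact (n - k) * Rf $ (n - k)) =
         fact (n - 1) * (real k * Rf $ k * Rf $ (n - k))" using j
      by (metis (no_types, lifting) diff_Suc_1 mult.assoc mult.left_commute)
  qed
  also have "\<dots> = fact (n - 1) * (\<Sum>k=0..n. real k * Rf $ k * Rf $ (n - k))"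
    by (simp add: sum_distrib_left sum.atLeast_Suc_atMost[of 0 n])
  also have "(\<Sum>k=0..n. real k * Rf $ k * Rf $ (n - k)) = (fps_X * fps_deriv Rf * Rf) $ n"
    by (rule conv_deriv)
  also have "fps_X * fps_deriv Rf * Rf = fps_const (1/2) * (fps_X * fps_deriv (Rf ^ 2))"
  proof -
    have "fps_deriv (Rf ^ 2) = 2 * (fps_deriv Rf * Rf)"
      by (simp add: power2_eq_square algebra_simps)
    moreover have "fps_const (1/2::real) * 2 = 1" unfolding numeral_fps_const fps_const_mult[symmetric] by simp
    ultimately show ?thesis by (metis (no_types, lifting) mult.assoc mult.commute mult_1)
  qed
  also have "(fps_const (1/2) * (fps_X * fps_deriv (Rf ^ 2))) $ n = 1/2 * (real n * (Rf ^ 2) $ n)"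
    using assms by (simp add: X_deriv_nth)
  also have "(Rf ^ 2) $ n = abelA (n - 2) 2 / fact (n - 2)"
    using assms by (simp add: Rf_power_nth)
  finally have e: "(\<Sum>k=1..n. real ((n - 1) choose (k - 1)) * (fact k * Rf $ k) * (fact (n - k) * Rf $ (n - k)))
     = fact (n - 1) * (1/2 * (real n * (abelA (n - 2) 2 / fact (n - 2))))" .
  obtain i where i: "n = i + 2" using assms by (metis add.commute le_Suc_ex)
  have f: "fact (n - 1) = real (n - 1) * fact (n - 2)"
    using i by (simp add: fact_Suc numeral_2_eq_2)
  show ?thesis
  proof (cases i)
    case 0 then show ?thesis using e i f by simp
  next
    case (Suc j)
    have "abelA (n - 2) 2 = 2 * real n ^ (n - 3)" using i Suc by (simp add: abelA_def add_ac)
    moreover have "real n ^ (n - 2) = real n * real n ^ (n - 3)" using i Suc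
      by (simp add: numeral_3_eq_3 numeral_2_eq_2)
    ultimately show ?thesis using e f by simp
  qed
qed

lemma tf_rec:
  assumes "n \<ge> 1"
  shows "fact n / fact (Suc p) * (Tf ^ Suc p) $ n =
    (\<Sum>k=1..n. real ((n - 1) choose (k - 1)) * (fact k * Tf $ k) * (fact (n - k) / fact p * (Tf ^ p) $ (n - k)))"
proof -
  obtain m where m: "n = Suc m" using assms by (cases n) auto
  have d: "fps_deriv (Tf ^ Suc p) = fps_const (real (Suc p)) * fps_deriv Tf * Tf ^ p"
    by (simp only: fps_deriv_power) simp
  have "real (Suc m) * (Tf ^ Suc p) $ Suc m = (fps_deriv (Tf ^ Suc p)) $ m"
    by (simp only: fps_deriv_nth Suc_eq_plus1)
  also have "\<dots> = real (Suc p) * (\<Sum>i=0..m. real (Suc i) * Tf $ Suc i * (Tf ^ p) $ (m - i))"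
    unfolding d by (simp only: mult.assoc fps_mult_left_const_nth) (simp add: fps_mult_nth sum_distrib_left mult.assoc)
  finally have e1: "real (Suc m) * (Tf ^ Suc p) $ Suc m =
      real (Suc p) * (\<Sum>i=0..m. real (Suc i) * Tf $ Suc i * (Tf ^ p) $ (m - i))" .
  have "fact n / fact (Suc p) * (Tf ^ Suc p) $ n
      = fact m / fact p * ((real (Suc m) * (Tf ^ Suc p) $ Suc m) / real (Suc p))"
    using m by (simp add: fact_Suc field_simps)
  also have "\<dots> = fact m / fact p * (\<Sum>i=0..m. real (Suc i) * Tf $ Suc i * (Tf ^ p) $ (m - i))"
    unfolding e1 by simp
  also have "\<dots> = (\<Sum>i=0..m. real (m choose i) * (fact (Suc i) * Tf $ Suc i) *
        (fact (m - i) / fact p * (Tf ^ p) $ (m - i)))"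
    unfolding sum_distrib_left
  proof (intro sum.cong refl)
    fix i assume "i \<in> {0..m}"
    then have h: "real (m choose i) * fact i * fact (m - i) = fact m"
      by (simp add: binomial_fact)
    show "fact m / fact p * (real (Suc i) * Tf $ Suc i * (Tf ^ p) $ (m - i)) =
         real (m choose i) * (fact (Suc i) * Tf $ Suc i) * (fact (m - i) / fact p * (Tf ^ p) $ (m - i))"
      unfolding h[symmetric] by (simp add: fact_Suc algebra_simps)
  qed
  also have "\<dots> = (\<Sum>k=1..n. real ((n - 1) choose (k - 1)) * (fact k * Tf $ k) *
       (fact (n - k) / fact p * (Tf ^ p) $ (n - k)))"
    unfolding m One_nat_def sum.shift_bounds_cl_Suc_ivl by simp
  finally show ?thesis .
qed

lemma Rf_power_fact_nth:
  assumes "n \<ge> 1"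
  shows "fact n * (Rf ^ j) $ n =
     real (if j = 0 then 0 else (n - 1) choose (j - 1)) * real n ^ (n - j) * fact j"
proof (cases "j = 0")
  case True then show ?thesis using assms by (simp add: Rf_power_nth abelA_def)
next
  case False
  show ?thesis
  proof (cases "n < j")
    case True
    then show ?thesis using False assms by (simp add: Rf_power_nth)
  next
    case nj: False
    show ?thesis
    proof (cases "n = j")
      case True then show ?thesis using False by (simp add: Rf_power_nth)
    next
      case False
      then have jn: "j < n" using nj by simp
      obtain j1 where j1: "j = Suc j1" using \<open>j \<noteq> 0\<close> by (cases j) auto
      have a: "abelA (n - j) (real j) = real j * real n ^ (n - j - 1)"
        using jn by (simp add: abelA_def)
      have b: "real ((n - 1) choose j1) * fact j1 * fact (n - 1 - j1) = fact (n - 1)"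
        using jn j1 by (simp add: binomial_fact)
      have fn: "fact n = real n * fact (n - 1)" using assms by (simp add: fact_reduce)
      have fj: "fact j = real j * fact j1" using j1 by (simp add: fact_Suc)
      have nn: "n - 1 - j1 = n - j" using j1 by simp
      have pw: "real n ^ (n - j) = real n * real n ^ (n - j - 1)" using jn
        by (metis Suc_diff_Suc diff_Suc_1 power_Suc)
      have "fact n * (Rf ^ j) $ n = real n * fact (n - 1) * (real j * real n ^ (n - j - 1)) / fact (n - j)"
        using jn by (simp add: Rf_power_nth a fn)
      also have "\<dots> = real ((n - 1) choose j1) * real n ^ (n - j) * fact j"
        unfolding b[symmetric] nn fj pw by (simp add: field_simps)
      finally show ?thesis using j1 by simp
    qed
  qed
qed

lemma Tf_power_expand:
  "Tf ^ p = (\<Sum>q\<le>p. fps_const (real (p choose q) * (- 1 / 2) ^ q) * Rf ^ (p + q))"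
proof -
  have t: "Tf = fps_const (-1/2) * Rf ^ 2 + Rf" by (simp add: Tf_def fps_const_neg[symmetric] del: fps_const_neg)
  have "Tf ^ p = (\<Sum>q\<le>p. of_nat (p choose q) * (fps_const (-1/2) * Rf ^ 2) ^ q * Rf ^ (p - q))"
    unfolding t by (rule binomial_ring)
  also have "\<dots> = (\<Sum>q\<le>p. fps_const (real (p choose q) * (- 1 / 2) ^ q) * Rf ^ (p + q))"
  proof (intro sum.cong refl)
    fix q assume "q \<in> {..p}"
    then have "2 * q + (p - q) = p + q" by simp
    then have "Rf ^ (2 * q) * Rf ^ (p - q) = Rf ^ (p + q)" by (simp add: add.commute flip: power_add)
    then show "of_nat (p choose q) * (fps_const (- 1 / 2) * Rf ^ 2) ^ q * Rf ^ (p - q) =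
         fps_const (real (p choose q) * (- 1 / 2) ^ q) * Rf ^ (p + q)"
      by (simp add: power_mult_distrib fps_const_power fps_of_nat power_mult[symmetric]
          fps_const_mult[symmetric] mult_ac del: fps_const_mult)
  qed
  finally show ?thesis .
qed

lemma coef_formula:
  assumes "n \<ge> 1"
  shows "fact n / fact p * (Tf ^ p) $ n =
     (1 / fact p) * (\<Sum>q\<le>p. (- 1 / 2) ^ q * real (p choose q)
                 * real (if p + q = 0 then 0 else (n - 1) choose (p + q - 1))
                 * real n ^ (n - p - q) * fact (p + q))"
proof -
  have "fact n * (Tf ^ p) $ n = (\<Sum>q\<le>p. real (p choose q) * (- 1 / 2) ^ q * (fact n * (Rf ^ (p + q)) $ n))"
    by (simp add: Tf_power_expand fps_sum_nth sum_distrib_left mult_ac)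
  also have "\<dots> = (\<Sum>q\<le>p. (- 1 / 2) ^ q * real (p choose q)
                 * real (if p + q = 0 then 0 else (n - 1) choose (p + q - 1))
                 * real n ^ (n - p - q) * fact (p + q))"
    by (intro sum.cong refl) (simp add: Rf_power_fact_nth[OF assms] diff_diff_add)
  finally show ?thesis by simp
qed

lemma ode_unique:
  fixes f g k :: "real fps"
  assumes "fps_deriv f = f * k" "fps_deriv g = g * k" "f $ 0 = g $ 0"
  shows "f = g"
proof -
  have "f $ n = g $ n" for n
  proof (induction n rule: less_induct)
    case (less n)
    show ?case
    proof (cases n)
      case 0 then show ?thesis using assms by simp
    next
      case (Suc m)
      have "real (Suc m) * f $ Suc m = (f * k) $ m"
        using arg_cong[OF assms(1), of "\<lambda>h. h $ m"] by simp
      also have "\<dots> = (g * k) $ m"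
        unfolding fps_mult_nth using less Suc by (intro sum.cong refl) auto
      also have "\<dots> = real (Suc m) * g $ Suc m"
        using arg_cong[OF assms(2), of "\<lambda>h. h $ m"] by simp
      finally show ?thesis using Suc by simp
    qed
  qed
  then show ?thesis by (simp add: fps_eq_iff)
qed

lemma E_deriv:
  fixes q :: "real fps"
  assumes "q $ 0 = 0"
  shows "fps_deriv (fps_exp 1 oo q) = (fps_exp 1 oo q) * fps_deriv q"
  using fps_compose_deriv[OF assms, of "fps_exp 1"] by simp

lemma E_add:
  fixes a b :: "real fps"
  assumes "a $ 0 = 0" "b $ 0 = 0"
  shows "fps_exp 1 oo (a + b) = (fps_exp 1 oo a) * (fps_exp 1 oo b)"
proof (rule ode_unique[where k = "fps_deriv (a + b)"])
  show "fps_deriv (fps_exp 1 oo (a + b)) = (fps_exp 1 oo (a + b)) * fps_deriv (a + b)"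
    using assms by (intro E_deriv) simp
  show "fps_deriv ((fps_exp 1 oo a) * (fps_exp 1 oo b)) = (fps_exp 1 oo a) * (fps_exp 1 oo b) * fps_deriv (a + b)"
    using assms by (simp add: E_deriv algebra_simps)
  show "(fps_exp 1 oo (a + b)) $ 0 = ((fps_exp 1 oo a) * (fps_exp 1 oo b)) $ 0" by simp
qed

lemma compose_Rf:
  assumes "n \<ge> 1"
  shows "(G oo Rf) $ n = (G * (fps_exp (real n) * (1 - fps_X))) $ n"
proof -
  have w: "(fps_exp (real n) * (1 - fps_X)) $ m =
      real n ^ m / fact m - (if m = 0 then 0 else real n ^ (m - 1) / fact (m - 1))" for m
    by (simp only: right_diff_distrib mult_1_right fps_sub_nth fps_X_mult_right_nth fps_exp_nth) simp
  have "(G oo Rf) $ n = (\<Sum>i=0..n. G $ i * (fps_exp (real n) * (1 - fps_X)) $ (n - i))"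
    unfolding fps_compose_nth
  proof (intro sum.cong refl)
    fix i assume i: "i \<in> {0..n}"
    have "(Rf ^ i) $ n = (fps_exp (real n) * (1 - fps_X)) $ (n - i)"
    proof (cases "n - i")
      case 0
      then have "i = n" using i by simp
      then show ?thesis by (simp add: Rf_power_nth w)
    next
      case (Suc m)
      have ri: "real i = real n - real (Suc m)" using Suc i by auto
      have "(Rf ^ i) $ n = real i * real n ^ m / fact (Suc m)"
        using Suc i by (simp add: Rf_power_nth abelA_def ri)
      also have "\<dots> = real n ^ Suc m / fact (Suc m) - real n ^ m / fact m"
      proof -
        have "real n ^ m / fact m = real (Suc m) * real n ^ m / fact (Suc m)"
          by (simp add: fact_Suc)
        then show ?thesis unfolding ri by (simp add: diff_divide_distrib algebra_simps)
      qed
      finally show ?thesis using Suc by (simp add: w)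
    qed
    then show "G $ i * (Rf ^ i) $ n = G $ i * (fps_exp (real n) * (1 - fps_X)) $ (n - i)" by simp
  qed
  also have "\<dots> = (G * (fps_exp (real n) * (1 - fps_X))) $ n" by (simp add: fps_mult_nth)
  finally show ?thesis .
qed

lemma Rf_nth0 [simp]: "Rf $ 0 = 0" by (simp add: Rf_def)

lemma herm:
  fixes lam :: real
  assumes n: "n \<ge> 1" and lam: "lam > 0"
  shows "fact n * (fps_exp lam oo Tf) $ n =
     sqrt lam ^ n * (hermiteHe n (sqrt lam + real n / sqrt lam)
              - real n / sqrt lam * hermiteHe (n - 1) (sqrt lam + real n / sqrt lam))"
proof -
  define s where "s = sqrt lam"
  define y where "y = s + real n / s"
  have s0: "s > 0" using lam by (simp add: s_def)
  have ss: "s * s = lam" using lam by (simp add: s_def)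
  have ys: "y * s = lam + real n" using s0 ss by (simp add: y_def field_simps)
  define P where "P = fps_const lam * fps_X - fps_const (lam / 2) * fps_X ^ 2"
  define Q where "Q = fps_const y * fps_X - fps_const (1 / 2) * fps_X ^ 2"
  define K where "K = fps_exp 1 oo Q"
  have P0: "P $ 0 = 0" by (simp add: P_def)
  have h1: "fps_exp lam = fps_exp 1 oo (fps_const lam * fps_X)" by simp
  have h2: "(fps_const lam * fps_X) oo Tf = fps_const lam * Tf"
    by (simp add: fps_compose_mult_distrib)
  have c: "fps_const lam * fps_const (1/2) = fps_const (lam/2)"
    by (metis fps_const_mult mult.right_neutral times_divide_eq_right)
  have h3: "P oo Rf = fps_const lam * Tf"
    by (simp add: c add: P_def Tf_def fps_compose_sub_distrib fps_compose_mult_distrib fps_X_power_compose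
        algebra_simps flip: fps_const_mult)
  have "fps_exp lam oo Tf = fps_exp 1 oo ((fps_const lam * fps_X) oo Tf)"
    unfolding h1 by (rule fps_compose_assoc[symmetric]) simp_all
  also have "\<dots> = (fps_exp 1 oo P) oo Rf"
    unfolding h2 h3[symmetric] by (rule fps_compose_assoc) (simp_all add: P0)
  finally have e1: "fps_exp lam oo Tf = (fps_exp 1 oo P) oo Rf" .
  have "(fps_exp lam oo Tf) $ n = ((fps_exp 1 oo P) * fps_exp (real n) * (1 - fps_X)) $ n"
    unfolding e1 compose_Rf[OF n] by (simp add: mult.assoc)
  also have "(fps_exp 1 oo P) * fps_exp (real n) = fps_exp 1 oo (P + fps_const (real n) * fps_X)"
    by (subst E_add) (simp_all add: P0)
  also have "P + fps_const (real n) * fps_X = Q oo (fps_const s * fps_X)"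
  proof (rule fps_ext)
    fix k
    have sy: "s * y = lam + real n" using ys by (simp add: mult.commute)
    show "(P + fps_const (real n) * fps_X) $ k = (Q oo (fps_const s * fps_X)) $ k"
      by (cases "k = 1"; cases "k = 2")
        (auto simp add: P_def Q_def fps_X_power_nth sy power2_eq_square ss)
  qed
  also have "fps_exp 1 oo (Q oo (fps_const s * fps_X)) = K oo (fps_const s * fps_X)"
    unfolding K_def by (rule fps_compose_assoc) (simp_all add: Q_def)
  finally have e2: "(fps_exp lam oo Tf) $ n = ((K oo (fps_const s * fps_X)) * (1 - fps_X)) $ n" .
  obtain m where m: "n = Suc m" using n by (cases n) auto
  have gen: "(M * (1 - fps_X)) $ Suc m = M $ Suc m - M $ m" for M :: "real fps"
    by (simp add: right_diff_distrib)
  have c1: "(K oo (fps_const s * fps_X)) $ j = s ^ j * K $ j" for j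
    by (rule fps_nth_compose_linear)
  have e3: "(fps_exp lam oo Tf) $ n = s ^ n * K $ n - s ^ m * K $ m"
    using e2 unfolding m gen c1 by simp
  have hn: "hermiteHe n y = fact n * K $ n" and hm: "hermiteHe m y = fact m * K $ m"
    by (simp_all add: hermiteHe_def K_def Q_def)
  have fn: "fact n = real n * fact m" using m by (simp add: fact_Suc)
  have sn: "s ^ n = s * s ^ m" using m by simp
  have "fact n * (fps_exp lam oo Tf) $ n = s ^ n * hermiteHe n y - real n * s ^ m * hermiteHe m y"
    unfolding e3 hn hm fn by (simp add: algebra_simps)
  also have "\<dots> = s ^ n * (hermiteHe n y - real n / s * hermiteHe m y)"
    using s0 unfolding sn by (simp add: field_simps)
  finally show ?thesis unfolding s_def y_def m by simp
qed



definition edges_in :: "nat set \<Rightarrow> nat set set" where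
  "edges_in V = {e. \<exists>a b. a \<in> V \<and> b \<in> V \<and> a \<noteq> b \<and> e = {a, b}}"

abbreviation reach :: "nat set set \<Rightarrow> (nat \<times> nat) set" where
  "reach F \<equiv> (edge_rel F)\<^sup>*"

definition Rc :: "nat set set \<Rightarrow> nat \<Rightarrow> nat set" where
  "Rc F x = {y. (x, y) \<in> reach F}"

definition comps :: "nat set \<Rightarrow> nat set set \<Rightarrow> nat set set" where
  "comps V F = V // {(a, b). a \<in> V \<and> b \<in> V \<and> (a, b) \<in> reach F}"

definition forests :: "nat set \<Rightarrow> nat \<Rightarrow> nat set set set" where
  "forests V p = {F. F \<subseteq> edges_in V \<and> is_forest F \<and> card (comps V F) = p}"

lemma u_e2_forests: "u_e2 n p = card (forests {0..<n} p)"
proof -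
  have "Kn_edges n = edges_in {0..<n}" by (auto simp: Kn_edges_def edges_in_def)
  moreover have "components n F = comps {0..<n} F" for F
    unfolding components_def comps_def
    by (rule arg_cong[where f="\<lambda>r. {0..<n} // r"]) auto
  ultimately show ?thesis by (simp add: u_e2_def forests_def)
qed

lemma edge_rel_iff [simp]: "(a, b) \<in> edge_rel F \<longleftrightarrow> {a, b} \<in> F"
  by (simp add: edge_rel_def)

lemma sym_edge_rel: "sym (edge_rel F)"
  by (auto simp: sym_def insert_commute)

lemma reach_sym: "(x, y) \<in> reach F \<Longrightarrow> (y, x) \<in> reach F"
  using sym_rtrancl[OF sym_edge_rel] by (auto simp: sym_def)

lemma reach_trans: "(x, y) \<in> reach F \<Longrightarrow> (y, z) \<in> reach F \<Longrightarrow> (x, z) \<in> reach F"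
  by (rule rtrancl_trans)

lemma reach_edge: "{a, b} \<in> F \<Longrightarrow> (a, b) \<in> reach F"
  by (rule r_into_rtrancl) simp

lemma reach_end: "(x, y) \<in> reach F \<Longrightarrow> x \<noteq> y \<Longrightarrow> y \<in> \<Union>F"
  by (erule rtranclE) auto

lemma reach_start: "(x, y) \<in> reach F \<Longrightarrow> x \<noteq> y \<Longrightarrow> x \<in> \<Union>F"
  using reach_end[OF reach_sym] by blast

lemma reach_out: "x \<notin> \<Union>F \<Longrightarrow> (x, y) \<in> reach F \<longleftrightarrow> y = x"
  using reach_start by blast

lemma reach_mono: "F \<subseteq> G \<Longrightarrow> (x, y) \<in> reach F \<Longrightarrow> (x, y) \<in> reach G"
proof -
  assume "F \<subseteq> G"
  then have "edge_rel F \<subseteq> edge_rel G" by (auto simp: edge_rel_def)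
  then show "(x, y) \<in> reach F \<Longrightarrow> (x, y) \<in> reach G" using rtrancl_mono by blast
qed

lemma edges_in_Union: "F \<subseteq> edges_in V \<Longrightarrow> \<Union>F \<subseteq> V"
  by (auto simp: edges_in_def)

lemma edges_in_mono: "V \<subseteq> W \<Longrightarrow> edges_in V \<subseteq> edges_in W"
  by (auto simp: edges_in_def)

lemma finite_edges_in: "finite V \<Longrightarrow> finite (edges_in V)"
  by (rule finite_subset[of _ "Pow V"]) (auto simp: edges_in_def)

lemma finite_forests: "finite V \<Longrightarrow> finite (forests V p)"
  by (rule finite_subset[of _ "Pow (edges_in V)"]) (auto simp: forests_def finite_edges_in)

lemma reach_in: "F \<subseteq> edges_in V \<Longrightarrow> x \<in> V \<Longrightarrow> (x, y) \<in> reach F \<Longrightarrow> y \<in> V"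
  using reach_end edges_in_Union by blast

lemma Rc_self: "x \<in> Rc F x" by (simp add: Rc_def)

lemma Rc_sub: "F \<subseteq> edges_in V \<Longrightarrow> x \<in> V \<Longrightarrow> Rc F x \<subseteq> V"
  using reach_in by (auto simp: Rc_def)

lemma Rc_same: "y \<in> Rc F x \<Longrightarrow> Rc F y = Rc F x"
  unfolding Rc_def using reach_sym reach_trans by blast

lemma Rc_out: "x \<notin> \<Union>F \<Longrightarrow> Rc F x = {x}"
  using reach_out by (auto simp: Rc_def)

lemma comps_eq: "F \<subseteq> edges_in V \<Longrightarrow> comps V F = Rc F ` V"
  unfolding comps_def quotient_def Rc_def using reach_in by blast

lemma finite_comps: "finite V \<Longrightarrow> F \<subseteq> edges_in V \<Longrightarrow> finite (comps V F)"
  by (simp add: comps_eq)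

lemma is_forest_mono: "is_forest F \<Longrightarrow> G \<subseteq> F \<Longrightarrow> is_forest G"
  unfolding is_forest_def
proof (intro ballI allI impI)
  fix e a b
  assume f: "\<forall>e\<in>F. \<forall>a b. e = {a, b} \<longrightarrow> (a, b) \<notin> reach (F - {e})"
    and "G \<subseteq> F" "e \<in> G" "e = {a, b}"
  then have "(a, b) \<notin> reach (F - {e})" by blast
  moreover have "G - {e} \<subseteq> F - {e}" using \<open>G \<subseteq> F\<close> by blast
  ultimately show "(a, b) \<notin> reach (G - {e})" using reach_mono by blast
qed

lemma reach_insert:
  assumes "(x, y) \<in> reach (insert {a, b} F)"
  shows "(x, y) \<in> reach F \<or> ((x, a) \<in> reach F \<and> (b, y) \<in> reach F) \<or> ((x, b) \<in> reach F \<and> (a, y) \<in> reach F)"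
  using assms
proof (induction rule: rtrancl_induct)
  case base
  then show ?case by simp
next
  case (step z w)
  from step.hyps(2) have e: "{z, w} = {a, b} \<or> {z, w} \<in> F" by simp
  show ?case
  proof (cases "{z, w} \<in> F")
    case True
    then have zw: "(z, w) \<in> reach F" by (rule reach_edge)
    from step.IH show ?thesis
    proof (elim disjE conjE)
      assume "(x, z) \<in> reach F" then show ?thesis using reach_trans[OF _ zw] by blast
    next
      assume "(x, a) \<in> reach F" "(b, z) \<in> reach F" then show ?thesis using reach_trans[OF _ zw] by blast
    next
      assume "(x, b) \<in> reach F" "(a, z) \<in> reach F" then show ?thesis using reach_trans[OF _ zw] by blast
    qed
  next
    case False
    then have "{z, w} = {a, b}" using e by blast
    then have "(z = a \<and> w = b) \<or> (z = b \<and> w = a)" by (auto simp: doubleton_eq_iff)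
    then show ?thesis
    proof (elim disjE conjE)
      assume zw: "z = a" "w = b"
      from step.IH show ?thesis
      proof (elim disjE conjE)
        assume "(x, z) \<in> reach F" then show ?thesis using zw by simp
      next
        assume "(x, a) \<in> reach F" "(b, z) \<in> reach F"
        then have "(x, w) \<in> reach F" using zw reach_sym reach_trans by metis
        then show ?thesis by simp
      next
        assume "(x, b) \<in> reach F" "(a, z) \<in> reach F" then show ?thesis using zw by simp
      qed
    next
      assume zw: "z = b" "w = a"
      from step.IH show ?thesis
      proof (elim disjE conjE)
        assume "(x, z) \<in> reach F" then show ?thesis using zw by simp
      next
        assume "(x, a) \<in> reach F" "(b, z) \<in> reach F" then show ?thesis using zw by simp
      next
        assume "(x, b) \<in> reach F" "(a, z) \<in> reach F"
        then have "(x, w) \<in> reach F" using zw reach_sym reach_trans by metis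
        then show ?thesis by simp
      qed
    qed
  qed
qed

lemma forest_insert:
  assumes f: "is_forest F" and nr: "(a, b) \<notin> reach F"
  shows "is_forest (insert {a, b} F)"
  unfolding is_forest_def
proof (intro ballI allI impI)
  fix e c d assume e: "e \<in> insert {a, b} F" and ecd: "e = {c, d}"
  have abF: "{a, b} \<notin> F" using nr reach_edge by blast
  show "(c, d) \<notin> reach (insert {a, b} F - {e})"
  proof (cases "e = {a, b}")
    case True
    then have "insert {a, b} F - {e} = F" using abF by auto
    moreover have "(c = a \<and> d = b) \<or> (c = b \<and> d = a)" using True ecd by (auto simp: doubleton_eq_iff)
    ultimately show ?thesis using nr reach_sym by (metis Diff_iff)
  next
    case False
    then have eF: "e \<in> F" using e by simp
    have s: "insert {a, b} F - {e} = insert {a, b} (F - {e})" using False by auto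
    have ncd: "(c, d) \<notin> reach (F - {e})" using f eF ecd unfolding is_forest_def by blast
    show ?thesis
    proof
      assume "(c, d) \<in> reach (insert {a, b} F - {e})"
      then have "(c, d) \<in> reach (F - {e}) \<or> ((c, a) \<in> reach (F - {e}) \<and> (b, d) \<in> reach (F - {e}))
          \<or> ((c, b) \<in> reach (F - {e}) \<and> (a, d) \<in> reach (F - {e}))"
        unfolding s by (rule reach_insert)
      moreover have "(c, d) \<in> reach F" using eF ecd reach_edge by blast
      moreover have "\<And>u v. (u, v) \<in> reach (F - {e}) \<Longrightarrow> (u, v) \<in> reach F"
        using reach_mono[of "F - {e}" F] by blast
      ultimately show False
      proof (elim disjE conjE)
        assume "(c, d) \<in> reach (F - {e})" then show False using ncd by blast
      next
        assume h: "(c, a) \<in> reach (F - {e})" "(b, d) \<in> reach (F - {e})"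
          and cd: "(c, d) \<in> reach F" and m: "\<And>u v. (u, v) \<in> reach (F - {e}) \<Longrightarrow> (u, v) \<in> reach F"
        have "(a, c) \<in> reach F" using m[OF h(1)] reach_sym by blast
        moreover have "(d, b) \<in> reach F" using m[OF h(2)] reach_sym by blast
        ultimately have "(a, b) \<in> reach F" using cd reach_trans by blast
        then show False using nr by blast
      next
        assume h: "(c, b) \<in> reach (F - {e})" "(a, d) \<in> reach (F - {e})"
          and cd: "(c, d) \<in> reach F" and m: "\<And>u v. (u, v) \<in> reach (F - {e}) \<Longrightarrow> (u, v) \<in> reach F"
        have "(b, c) \<in> reach F" using m[OF h(1)] reach_sym by blast
        moreover have "(d, a) \<in> reach F" using m[OF h(2)] reach_sym by blast
        ultimately have "(b, a) \<in> reach F" using cd reach_trans by blast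
        then show False using nr reach_sym by blast
      qed
    qed
  qed
qed

lemma forest_insert_inv:
  assumes "is_forest (insert {a, b} F)" "{a, b} \<notin> F"
  shows "(a, b) \<notin> reach F"
proof -
  have "insert {a, b} F - {{a, b}} = F" using assms(2) by auto
  then show ?thesis using assms(1) unfolding is_forest_def by (metis insertI1)
qed

lemma Rc_insert:
  assumes nr: "(a, b) \<notin> reach F"
  shows "Rc (insert {a, b} F) x = (if x \<in> Rc F a \<union> Rc F b then Rc F a \<union> Rc F b else Rc F x)"
proof -
  let ?G = "insert {a, b} F"
  have mono: "(u, v) \<in> reach F \<Longrightarrow> (u, v) \<in> reach ?G" for u v using reach_mono[of F ?G] by blast
  have ab: "(a, b) \<in> reach ?G" by (rule reach_edge) simp
  show ?thesis
  proof (cases "x \<in> Rc F a \<union> Rc F b")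
    case True
    then have xr: "(x, a) \<in> reach ?G \<and> (x, b) \<in> reach ?G"
      using ab reach_sym reach_trans mono unfolding Rc_def by blast
    have "Rc ?G x = Rc F a \<union> Rc F b"
    proof
      show "Rc ?G x \<subseteq> Rc F a \<union> Rc F b"
      proof
        fix y assume "y \<in> Rc ?G x"
        then have "(x, y) \<in> reach ?G" by (simp add: Rc_def)
        from reach_insert[OF this] True show "y \<in> Rc F a \<union> Rc F b"
          unfolding Rc_def using reach_sym reach_trans by blast
      qed
      show "Rc F a \<union> Rc F b \<subseteq> Rc ?G x"
        unfolding Rc_def using xr mono reach_trans by blast
    qed
    then show ?thesis using True by simp
  next
    case False
    then have "(x, a) \<notin> reach F" "(x, b) \<notin> reach F" unfolding Rc_def using reach_sym by blast+
    then have "Rc ?G x = Rc F x" unfolding Rc_def using reach_insert mono by blast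
    then show ?thesis using False by simp
  qed
qed

lemma merge_card:
  assumes V: "finite V" and F: "F \<subseteq> edges_in V" and a: "a \<in> V" and b: "b \<in> V"
    and nr: "(a, b) \<notin> reach F"
  shows "card (comps V (insert {a, b} F)) + 1 = card (comps V F)"
proof -
  let ?G = "insert {a, b} F"
  define Ca where "Ca = Rc F a"
  define Cb where "Cb = Rc F b"
  define S where "S = Rc F ` (V - (Ca \<union> Cb))"
  have G: "?G \<subseteq> edges_in V" using F a b nr by (auto simp: edges_in_def)
  have cG: "comps V ?G = insert (Ca \<union> Cb) S"
  proof -
    have "comps V ?G = Rc ?G ` V" using G by (rule comps_eq)
    also have "\<dots> = Rc ?G ` (V \<inter> (Ca \<union> Cb)) \<union> Rc ?G ` (V - (Ca \<union> Cb))" by blast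
    also have "Rc ?G ` (V \<inter> (Ca \<union> Cb)) = {Ca \<union> Cb}"
      using a Rc_self[of a F] by (auto simp: Rc_insert[OF nr] Ca_def Cb_def)
    also have "Rc ?G ` (V - (Ca \<union> Cb)) = S"
      unfolding S_def by (intro image_cong refl) (auto simp: Rc_insert[OF nr] Ca_def Cb_def)
    finally show ?thesis by simp
  qed
  have cF: "comps V F = insert Ca (insert Cb S)"
  proof -
    have "comps V F = Rc F ` V" using F by (rule comps_eq)
    also have "\<dots> = Rc F ` (V \<inter> Ca) \<union> Rc F ` (V \<inter> Cb) \<union> S" unfolding S_def by blast
    also have "Rc F ` (V \<inter> Ca) = {Ca}"
      using a Rc_self[of a F] Rc_same unfolding Ca_def by blast
    also have "Rc F ` (V \<inter> Cb) = {Cb}"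
      using b Rc_self[of b F] Rc_same unfolding Cb_def by blast
    finally show ?thesis by auto
  qed
  have nS: "D \<notin> S" if "a \<in> D \<or> b \<in> D" "D \<subseteq> Ca \<union> Cb" for D
  proof
    assume "D \<in> S"
    then obtain x where x: "x \<in> V - (Ca \<union> Cb)" "D = Rc F x" unfolding S_def by blast
    then have "Rc F a = D \<or> Rc F b = D" using that Rc_same by blast
    then have "x \<in> Ca \<union> Cb" using x Rc_self[of x F] unfolding Ca_def Cb_def by blast
    then show False using x by blast
  qed
  have "Ca \<notin> S" using nS[of Ca] Rc_self[of a F] unfolding Ca_def by blast
  moreover have "Cb \<notin> S" using nS[of Cb] Rc_self[of b F] unfolding Cb_def by blast
  moreover have "Ca \<union> Cb \<notin> S" using nS[of "Ca \<union> Cb"] Rc_self[of a F] unfolding Ca_def by blast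
  moreover have "Ca \<noteq> Cb" using nr Rc_self[of b F] unfolding Ca_def Cb_def Rc_def by blast
  moreover have "finite S" using V unfolding S_def by simp
  ultimately show ?thesis unfolding cG cF by simp
qed

lemma comps_empty: "comps V {} = (\<lambda>x. {x}) ` V"
proof -
  have "Rc {} x = {x}" for x by (rule Rc_out) simp
  then show ?thesis by (simp add: comps_eq)
qed

lemma edge_count:
  assumes V: "finite V" and F: "F \<subseteq> edges_in V" and f: "is_forest F"
  shows "card F + card (comps V F) = card V"
proof -
  have "finite F" using finite_subset[OF F finite_edges_in[OF V]] .
  then show ?thesis using F f
  proof (induction F rule: finite_induct)
    case empty
    have "card ((\<lambda>x. {x}) ` V) = card V" by (rule card_image) (simp add: inj_on_def)
    then show ?case by (simp add: comps_empty)
  next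
    case (insert e F)
    obtain a b where ab: "a \<in> V" "b \<in> V" "a \<noteq> b" "e = {a, b}"
      using insert.prems(1) by (auto simp: edges_in_def)
    have F: "F \<subseteq> edges_in V" using insert.prems(1) by simp
    have fF: "is_forest F" using is_forest_mono[OF insert.prems(2)] by blast
    have nr: "(a, b) \<notin> reach F" using forest_insert_inv insert.prems(2) insert.hyps(2) ab by blast
    have "card (insert e F) = Suc (card F)" using insert.hyps by simp
    moreover have "card (comps V (insert e F)) + 1 = card (comps V F)"
      using merge_card[OF V F ab(1,2) nr] ab by simp
    ultimately show ?case using insert.IH[OF F fF] by simp
  qed
qed

lemma reach_union:
  assumes d: "\<Union>F1 \<inter> \<Union>F2 = {}"
  shows "(x, y) \<in> reach (F1 \<union> F2) \<longleftrightarrow> (x, y) \<in> reach F1 \<or> (x, y) \<in> reach F2"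
proof
  assume "(x, y) \<in> reach (F1 \<union> F2)"
  then show "(x, y) \<in> reach F1 \<or> (x, y) \<in> reach F2"
  proof (induction rule: rtrancl_induct)
    case base then show ?case by simp
  next
    case (step z w)
    then have e: "{z, w} \<in> F1 \<or> {z, w} \<in> F2" by simp
    show ?case
    proof (cases "{z, w} \<in> F1")
      case True
      then have z1: "z \<in> \<Union>F1" by blast
      from step.IH show ?thesis
      proof
        assume "(x, z) \<in> reach F1"
        then show ?thesis using True reach_edge reach_trans by blast
      next
        assume h: "(x, z) \<in> reach F2"
        show ?thesis
        proof (cases "x = z")
          case True then show ?thesis using \<open>{z, w} \<in> F1\<close> reach_edge by blast
        next
          case False
          then have "z \<in> \<Union>F2" using reach_end[OF h] by blast
          then show ?thesis using z1 d by blast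
        qed
      qed
    next
      case False
      then have T: "{z, w} \<in> F2" using e by blast
      then have z2: "z \<in> \<Union>F2" by blast
      from step.IH show ?thesis
      proof
        assume "(x, z) \<in> reach F2"
        then show ?thesis using T reach_edge reach_trans by blast
      next
        assume h: "(x, z) \<in> reach F1"
        show ?thesis
        proof (cases "x = z")
          case True then show ?thesis using T reach_edge by blast
        next
          case False
          then have "z \<in> \<Union>F1" using reach_end[OF h] by blast
          then show ?thesis using z2 d by blast
        qed
      qed
    qed
  qed
next
  assume "(x, y) \<in> reach F1 \<or> (x, y) \<in> reach F2"
  then show "(x, y) \<in> reach (F1 \<union> F2)" using reach_mono[of F1 "F1 \<union> F2"] reach_mono[of F2 "F1 \<union> F2"] by blast
qed

lemma Rc_union_left:
  assumes d: "\<Union>F1 \<inter> \<Union>F2 = {}" and x: "x \<notin> \<Union>F2"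
  shows "Rc (F1 \<union> F2) x = Rc F1 x"
  using reach_union[OF d] reach_out[OF x] Rc_self[of x F1] unfolding Rc_def by auto

lemma forest_union_aux:
  assumes d: "\<Union>F1 \<inter> \<Union>F2 = {}" and f1: "is_forest F1" and e: "e \<in> F1" and ab: "e = {a, b}"
  shows "(a, b) \<notin> reach (F1 \<union> F2 - {e})"
proof
  assume h: "(a, b) \<in> reach (F1 \<union> F2 - {e})"
  have aF1: "a \<in> \<Union>F1" using e ab by blast
  have eF2: "e \<notin> F2"
  proof
    assume "e \<in> F2" then have "a \<in> \<Union>F2" using ab by blast
    then show False using aF1 d by blast
  qed
  have s: "F1 \<union> F2 - {e} = (F1 - {e}) \<union> F2" using eF2 by blast
  have d': "\<Union>(F1 - {e}) \<inter> \<Union>F2 = {}" using d by blast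
  have n1: "(a, b) \<notin> reach (F1 - {e})" using f1 e ab unfolding is_forest_def by blast
  then have "a \<noteq> b" by blast
  moreover have "a \<notin> \<Union>F2" using d aF1 by blast
  ultimately have "(a, b) \<notin> reach F2" using reach_out[of a F2 b] by simp
  moreover have "(a, b) \<in> reach (F1 - {e}) \<or> (a, b) \<in> reach F2"
    using h unfolding s by (simp only: reach_union[OF d'])
  ultimately show False using n1 by blast
qed

lemma forest_union:
  assumes d: "\<Union>F1 \<inter> \<Union>F2 = {}"
  shows "is_forest (F1 \<union> F2) \<longleftrightarrow> is_forest F1 \<and> is_forest F2"
proof
  assume "is_forest (F1 \<union> F2)"
  then show "is_forest F1 \<and> is_forest F2" using is_forest_mono by blast
next
  assume f: "is_forest F1 \<and> is_forest F2"
  have d2: "\<Union>F2 \<inter> \<Union>F1 = {}" using d by blast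
  show "is_forest (F1 \<union> F2)"
    unfolding is_forest_def
  proof (intro ballI allI impI)
    fix e a b assume e: "e \<in> F1 \<union> F2" and ab: "e = {a, b}"
    show "(a, b) \<notin> reach (F1 \<union> F2 - {e})"
    proof (cases "e \<in> F1")
      case True then show ?thesis using forest_union_aux[OF d] f ab by blast
    next
      case False
      then have "e \<in> F2" using e by blast
      then show ?thesis using forest_union_aux[OF d2, of e a b] f ab by (simp add: Un_commute)
    qed
  qed
qed

lemma tree_Rc:
  assumes F: "F \<subseteq> edges_in C" and c1: "card (comps C F) = 1" and x: "x \<in> C"
  shows "Rc F x = C"
proof -
  have cc: "comps C F = Rc F ` C" using F by (rule comps_eq)
  obtain D where D: "comps C F = {D}" using c1 card_1_singletonE by blast
  have all: "Rc F y = D" if "y \<in> C" for y using D that unfolding cc by blast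
  show ?thesis
  proof
    show "Rc F x \<subseteq> C" using Rc_sub[OF F x] .
    show "C \<subseteq> Rc F x" using all[OF x] all Rc_self by blast
  qed
qed

lemma comps_tree:
  assumes F: "F \<subseteq> edges_in C" and c1: "card (comps C F) = 1"
  shows "comps C F = {C}"
proof -
  have "comps C F \<noteq> {}" using c1 by auto
  then have "C \<noteq> {}" using comps_eq[OF F] by auto
  then show ?thesis using comps_eq[OF F] tree_Rc[OF F c1] by auto
qed

lemma comps_join:
  assumes v0: "v0 \<in> C" and CV: "C \<subseteq> V" and T: "T \<subseteq> edges_in C" and t1: "card (comps C T) = 1"
    and F': "F' \<subseteq> edges_in (V - C)"
  shows "comps V (T \<union> F') = insert C (comps (V - C) F')" "C \<notin> comps (V - C) F'"
    "\<Union>T \<inter> \<Union>F' = {}"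
proof -
  have uT: "\<Union>T \<subseteq> C" using edges_in_Union[OF T] .
  have uF: "\<Union>F' \<subseteq> V - C" using edges_in_Union[OF F'] .
  show d: "\<Union>T \<inter> \<Union>F' = {}" using uT uF by blast
  have d2: "\<Union>F' \<inter> \<Union>T = {}" using d by blast
  have U: "T \<union> F' \<subseteq> edges_in V"
    using T F' edges_in_mono[of C V] edges_in_mono[of "V - C" V] CV by blast
  have "comps V (T \<union> F') = Rc (T \<union> F') ` V" using U by (rule comps_eq)
  also have "\<dots> = Rc (T \<union> F') ` C \<union> Rc (T \<union> F') ` (V - C)" using CV by blast
  also have "Rc (T \<union> F') ` C = {C}"
  proof -
    have "Rc (T \<union> F') x = C" if "x \<in> C" for x
    proof -
      have "x \<notin> \<Union>F'" using that uF by blast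
      then have "Rc (T \<union> F') x = Rc T x" using Rc_union_left[OF d] by blast
      also have "\<dots> = C" using tree_Rc[OF T t1 that] .
      finally show ?thesis .
    qed
    then show ?thesis using v0 by blast
  qed
  also have "Rc (T \<union> F') ` (V - C) = comps (V - C) F'"
  proof -
    have "Rc (T \<union> F') x = Rc F' x" if "x \<in> V - C" for x
    proof -
      have "x \<notin> \<Union>T" using that uT by blast
      then show ?thesis using Rc_union_left[OF d2, of x] by (simp add: Un_commute)
    qed
    then show ?thesis using comps_eq[OF F'] by auto
  qed
  finally show "comps V (T \<union> F') = insert C (comps (V - C) F')" by simp
  show "C \<notin> comps (V - C) F'"
  proof
    assume "C \<in> comps (V - C) F'"
    then obtain x where "x \<in> V - C" "C = Rc F' x" using comps_eq[OF F'] by blast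
    then have "C \<subseteq> V - C" using Rc_sub[OF F'] by blast
    then show False using v0 by blast
  qed
qed

lemma split_fwd:
  assumes V: "finite V" and v0: "v0 \<in> C" and CV: "C \<subseteq> V"
    and T: "T \<in> forests C 1" and F': "F' \<in> forests (V - C) p"
  shows "T \<union> F' \<in> forests V (Suc p)" "Rc (T \<union> F') v0 = C"
    "comps V (T \<union> F') = insert C (comps (V - C) F')"
    "{e \<in> T \<union> F'. e \<subseteq> C} = T" "{e \<in> T \<union> F'. \<not> e \<subseteq> C} = F'"
proof -
  have T1: "T \<subseteq> edges_in C" "is_forest T" "card (comps C T) = 1" using T by (auto simp: forests_def)
  have F1: "F' \<subseteq> edges_in (V - C)" "is_forest F'" "card (comps (V - C) F') = p"
    using F' by (auto simp: forests_def)
  note J = comps_join[OF v0 CV T1(1) T1(3) F1(1)]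
  show cc: "comps V (T \<union> F') = insert C (comps (V - C) F')" by (rule J(1))
  have U: "T \<union> F' \<subseteq> edges_in V"
    using T1(1) F1(1) edges_in_mono[of C V] edges_in_mono[of "V - C" V] CV by blast
  have fin: "finite (comps (V - C) F')" using finite_comps[OF _ F1(1)] V by simp
  show "T \<union> F' \<in> forests V (Suc p)"
    unfolding forests_def using U forest_union[OF J(3)] T1(2) F1(2) cc J(2) fin F1(3) by simp
  have "v0 \<notin> \<Union>F'" using edges_in_Union[OF F1(1)] v0 by blast
  then show "Rc (T \<union> F') v0 = C"
    using Rc_union_left[OF J(3)] tree_Rc[OF T1(1) T1(3) v0] by simp
  have eT: "e \<subseteq> C" if "e \<in> T" for e using that T1(1) by (auto simp: edges_in_def)
  have eF: "\<not> e \<subseteq> C" if "e \<in> F'" for e using that F1(1) by (auto simp: edges_in_def)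
  show "{e \<in> T \<union> F'. e \<subseteq> C} = T" "{e \<in> T \<union> F'. \<not> e \<subseteq> C} = F'"
    using eT eF by blast+
qed

lemma split_bwd:
  assumes V: "finite V" and v0: "v0 \<in> V" and F: "F \<in> forests V (Suc p)"
  defines "C \<equiv> Rc F v0"
  shows "v0 \<in> C" "C \<subseteq> V" "{e \<in> F. e \<subseteq> C} \<in> forests C 1" "{e \<in> F. \<not> e \<subseteq> C} \<in> forests (V - C) p"
proof -
  have F1: "F \<subseteq> edges_in V" "is_forest F" "card (comps V F) = Suc p" using F by (auto simp: forests_def)
  show v0C: "v0 \<in> C" unfolding C_def by (rule Rc_self)
  show CV: "C \<subseteq> V" unfolding C_def using Rc_sub[OF F1(1) v0] .
  define T where "T = {e \<in> F. e \<subseteq> C}"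
  define F' where "F' = {e \<in> F. \<not> e \<subseteq> C}"
  have FU: "F = T \<union> F'" unfolding T_def F'_def by blast
  have T: "T \<subseteq> edges_in C"
  proof
    fix e assume "e \<in> T"
    then have e: "e \<in> F" "e \<subseteq> C" unfolding T_def by auto
    then obtain a b where "a \<noteq> b" "e = {a, b}" using F1(1) unfolding edges_in_def by blast
    then show "e \<in> edges_in C" using e unfolding edges_in_def by blast
  qed
  have clos: "b \<in> C" if "a \<in> C" "{a, b} \<in> F" for a b
    using that reach_edge[OF that(2)] reach_trans unfolding C_def Rc_def by blast
  have F': "F' \<subseteq> edges_in (V - C)"
  proof
    fix e assume e: "e \<in> F'"
    then obtain a b where ab: "a \<in> V" "b \<in> V" "a \<noteq> b" "e = {a, b}" "e \<in> F"
      using F1(1) unfolding F'_def edges_in_def by blast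
    have "\<not> e \<subseteq> C" using e unfolding F'_def by blast
    moreover have "b \<in> C" if "a \<in> C" using clos[OF that] ab by blast
    moreover have "a \<in> C" if "b \<in> C" using clos[OF that] ab by (simp add: insert_commute)
    ultimately have "a \<notin> C" "b \<notin> C" using ab by blast+
    then show "e \<in> edges_in (V - C)" using ab unfolding edges_in_def by blast
  qed
  have d: "\<Union>T \<inter> \<Union>F' = {}" using edges_in_Union[OF T] edges_in_Union[OF F'] by blast
  have fT: "is_forest T" "is_forest F'" using is_forest_mono[OF F1(2)] FU by blast+
  have RcT: "Rc T x = C" if "x \<in> C" for x
  proof -
    have "x \<notin> \<Union>F'" using that edges_in_Union[OF F'] by blast
    then have "Rc T x = Rc F x" using Rc_union_left[OF d] FU by simp
    also have "\<dots> = C" using Rc_same[of x F v0] that unfolding C_def by blast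
    finally show ?thesis .
  qed
  have cT: "comps C T = {C}" using comps_eq[OF T] RcT v0C by blast
  then have t1: "card (comps C T) = 1" by simp
  show "{e \<in> F. e \<subseteq> C} \<in> forests C 1" using T fT t1 unfolding T_def forests_def by simp
  note J = comps_join[OF v0C CV T t1 F']
  have fin: "finite (comps (V - C) F')" using finite_comps[OF _ F'] V by simp
  have "card (comps V F) = Suc (card (comps (V - C) F'))" using J(1,2) fin FU by simp
  then have "card (comps (V - C) F') = p" using F1(3) by simp
  then show "{e \<in> F. \<not> e \<subseteq> C} \<in> forests (V - C) p"
    using F' fT unfolding F'_def forests_def by simp
qed



lemma split_sum:
  fixes g :: "nat set set \<Rightarrow> real"
  assumes V: "finite V" and v0: "v0 \<in> V"
  shows "(\<Sum>F\<in>forests V (Suc p). g (comps V F)) =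
    (\<Sum>C\<in>{C. v0 \<in> C \<and> C \<subseteq> V}. \<Sum>TF\<in>forests C 1 \<times> forests (V - C) p. g (insert C (comps (V - C) (snd TF))))"
proof -
  let ?A = "forests V (Suc p)"
  let ?I = "{C. v0 \<in> C \<and> C \<subseteq> V}"
  have fA: "finite ?A" using finite_forests[OF V] .
  have fI: "finite ?I" using V by (auto intro: finite_subset[of _ "Pow V"])
  have img: "(\<lambda>F. Rc F v0) ` ?A \<subseteq> ?I"
  proof
    fix C assume "C \<in> (\<lambda>F. Rc F v0) ` ?A"
    then obtain F where "F \<in> ?A" "C = Rc F v0" by blast
    then show "C \<in> ?I" using split_bwd(1,2)[OF V v0, of F p] by simp
  qed
  have "(\<Sum>F\<in>?A. g (comps V F)) = (\<Sum>C\<in>?I. \<Sum>F\<in>{F \<in> ?A. Rc F v0 = C}. g (comps V F))"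
    using sum.group[OF fA fI img, of "\<lambda>F. g (comps V F)"] by simp
  also have "\<dots> = (\<Sum>C\<in>?I. \<Sum>TF\<in>forests C 1 \<times> forests (V - C) p. g (insert C (comps (V - C) (snd TF))))"
  proof (intro sum.cong refl)
    fix C assume C: "C \<in> ?I"
    then have v0C: "v0 \<in> C" and CV: "C \<subseteq> V" by auto
    let ?S = "forests C 1 \<times> forests (V - C) p"
    let ?h = "\<lambda>TF. fst TF \<union> snd TF"
    have bij: "bij_betw ?h ?S {F \<in> ?A. Rc F v0 = C}"
    proof (rule bij_betw_byWitness[where f' = "\<lambda>F. ({e \<in> F. e \<subseteq> C}, {e \<in> F. \<not> e \<subseteq> C})"])
      show "\<forall>a\<in>?S. ({e \<in> ?h a. e \<subseteq> C}, {e \<in> ?h a. \<not> e \<subseteq> C}) = a"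
      proof
        fix a assume "a \<in> ?S"
        then obtain T F' where a: "a = (T, F')" "T \<in> forests C 1" "F' \<in> forests (V - C) p" by auto
        show "({e \<in> ?h a. e \<subseteq> C}, {e \<in> ?h a. \<not> e \<subseteq> C}) = a"
          using split_fwd(4,5)[OF V v0C CV a(2,3)] a(1) by simp
      qed
      show "\<forall>a'\<in>{F \<in> ?A. Rc F v0 = C}. ?h ({e \<in> a'. e \<subseteq> C}, {e \<in> a'. \<not> e \<subseteq> C}) = a'"
        by auto
      show "?h ` ?S \<subseteq> {F \<in> ?A. Rc F v0 = C}"
      proof
        fix F assume "F \<in> ?h ` ?S"
        then obtain T F' where a: "F = T \<union> F'" "T \<in> forests C 1" "F' \<in> forests (V - C) p" by auto
        show "F \<in> {F \<in> ?A. Rc F v0 = C}"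
          using split_fwd(1,2)[OF V v0C CV a(2,3)] a(1) by simp
      qed
      show "(\<lambda>F. ({e \<in> F. e \<subseteq> C}, {e \<in> F. \<not> e \<subseteq> C})) ` {F \<in> ?A. Rc F v0 = C} \<subseteq> ?S"
      proof
        fix x assume "x \<in> (\<lambda>F. ({e \<in> F. e \<subseteq> C}, {e \<in> F. \<not> e \<subseteq> C})) ` {F \<in> ?A. Rc F v0 = C}"
        then obtain F where F: "F \<in> ?A" "Rc F v0 = C" "x = ({e \<in> F. e \<subseteq> C}, {e \<in> F. \<not> e \<subseteq> C})" by blast
        show "x \<in> ?S" using split_bwd(3,4)[OF V v0 F(1)] F(2,3) by simp
      qed
    qed
    have "(\<Sum>F\<in>{F \<in> ?A. Rc F v0 = C}. g (comps V F)) = (\<Sum>TF\<in>?S. g (comps V (?h TF)))"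
      using sum.reindex_bij_betw[OF bij, of "\<lambda>F. g (comps V F)"] by simp
    also have "\<dots> = (\<Sum>TF\<in>?S. g (insert C (comps (V - C) (snd TF))))"
    proof (intro sum.cong refl)
      fix TF assume "TF \<in> ?S"
      then obtain T F' where a: "TF = (T, F')" "T \<in> forests C 1" "F' \<in> forests (V - C) p" by auto
      show "g (comps V (?h TF)) = g (insert C (comps (V - C) (snd TF)))"
        using split_fwd(3)[OF V v0C CV a(2,3)] a(1) by simp
    qed
    finally show "(\<Sum>F\<in>{F \<in> ?A. Rc F v0 = C}. g (comps V F)) = (\<Sum>TF\<in>?S. g (insert C (comps (V - C) (snd TF))))" .
  qed
  finally show ?thesis .
qed

lemma count_subsets:
  fixes f :: "nat \<Rightarrow> real"
  assumes V: "finite V" and v0: "v0 \<in> V"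
  shows "(\<Sum>C\<in>{C. v0 \<in> C \<and> C \<subseteq> V}. f (card C)) =
         (\<Sum>k=1..card V. real ((card V - 1) choose (k - 1)) * f k)"
proof -
  define W where "W = V - {v0}"
  have W: "finite W" "v0 \<notin> W" using V unfolding W_def by auto
  have cW: "card W = card V - 1" using V v0 unfolding W_def by simp
  have "card V > 0" using V v0 card_gt_0_iff by blast
  then have cV: "card V = Suc (card W)" using cW by simp
  have I: "{C. v0 \<in> C \<and> C \<subseteq> V} = insert v0 ` Pow W"
  proof
    show "{C. v0 \<in> C \<and> C \<subseteq> V} \<subseteq> insert v0 ` Pow W"
    proof
      fix C assume "C \<in> {C. v0 \<in> C \<and> C \<subseteq> V}"
      then have "C = insert v0 (C - {v0})" "C - {v0} \<in> Pow W" unfolding W_def by auto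
      then show "C \<in> insert v0 ` Pow W" by blast
    qed
    show "insert v0 ` Pow W \<subseteq> {C. v0 \<in> C \<and> C \<subseteq> V}" using v0 unfolding W_def by auto
  qed
  have inj: "inj_on (insert v0) (Pow W)"
  proof (rule inj_onI)
    fix S S' assume S: "S \<in> Pow W" "S' \<in> Pow W" "insert v0 S = insert v0 S'"
    then have "v0 \<notin> S" "v0 \<notin> S'" using W(2) by auto
    then have "S = insert v0 S - {v0}" "S' = insert v0 S' - {v0}" by auto
    then show "S = S'" using S(3) by simp
  qed
  have "(\<Sum>C\<in>{C. v0 \<in> C \<and> C \<subseteq> V}. f (card C)) = (\<Sum>S\<in>Pow W. f (card (insert v0 S)))"
    unfolding I using sum.reindex[OF inj, of "\<lambda>C. f (card C)"] by simp
  also have "\<dots> = (\<Sum>S\<in>Pow W. f (Suc (card S)))"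
  proof (intro sum.cong refl)
    fix S assume "S \<in> Pow W"
    then have "finite S" "v0 \<notin> S" using W finite_subset by auto
    then show "f (card (insert v0 S)) = f (Suc (card S))" by simp
  qed
  also have "\<dots> = (\<Sum>k\<in>{0..card W}. \<Sum>S\<in>{S \<in> Pow W. card S = k}. f (Suc (card S)))"
  proof -
    have "card ` Pow W \<subseteq> {0..card W}" using W(1) by (auto intro: card_mono)
    from sum.group[OF _ _ this, of "\<lambda>S. f (Suc (card S))"] W show ?thesis by simp
  qed
  also have "\<dots> = (\<Sum>k\<in>{0..card W}. real (card W choose k) * f (Suc k))"
  proof (intro sum.cong refl)
    fix k
    have "{S \<in> Pow W. card S = k} = {S. S \<subseteq> W \<and> card S = k}" by auto
    then have "card {S \<in> Pow W. card S = k} = card W choose k" using n_subsets[OF W(1)] by simp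
    then show "(\<Sum>S\<in>{S \<in> Pow W. card S = k}. f (Suc (card S))) = real (card W choose k) * f (Suc k)"
      by simp
  qed
  also have "\<dots> = (\<Sum>k=1..card V. real ((card V - 1) choose (k - 1)) * f k)"
    unfolding cV One_nat_def sum.shift_bounds_cl_Suc_ivl by simp
  finally show ?thesis .
qed

lemma card_pairs_edges:
  assumes F: "F \<subseteq> edges_in V" and fin: "finite F"
  shows "card {(a, b). {a, b} \<in> F} = 2 * card F"
proof -
  have eq: "{(a, b). {a, b} \<in> F} = (\<Union>e\<in>F. {(a, b). {a, b} = e})" by blast
  have two: "card {(a, b). {a, b} = e} = 2" if "e \<in> F" for e
  proof -
    have "e \<in> edges_in V" using that F by blast
    then obtain x y where xy: "x \<noteq> y" "e = {x, y}" unfolding edges_in_def by blast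
    have "{(a, b). {a, b} = e} = {(x, y), (y, x)}" using xy by (auto simp: doubleton_eq_iff)
    then show ?thesis using xy by simp
  qed
  have fe: "finite {(a, b). {a, b} = e}" if "e \<in> F" for e
    using two[OF that] by (intro card_ge_0_finite) simp
  have "card (\<Union>e\<in>F. {(a, b). {a, b} = e}) = (\<Sum>e\<in>F. card {(a, b). {a, b} = e})"
  proof (rule card_UN_disjoint[OF fin])
    show "\<forall>i\<in>F. finite {(a, b). {a, b} = i}" using fe by blast
    show "\<forall>i\<in>F. \<forall>j\<in>F. i \<noteq> j \<longrightarrow> {(a, b). {a, b} = i} \<inter> {(a, b). {a, b} = j} = {}"
      by blast
  qed
  also have "\<dots> = (\<Sum>e\<in>F. 2)" using two by simp
  finally show ?thesis unfolding eq by simp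
qed

definition sep :: "nat set set \<Rightarrow> nat" where
  "sep P = card {(a, b). a \<in> \<Union>P \<and> b \<in> \<Union>P \<and> \<not> (\<exists>D\<in>P. a \<in> D \<and> b \<in> D)}"

lemma pairs_comps:
  assumes F: "F \<subseteq> edges_in V"
  shows "{(a, b). a \<in> V \<and> b \<in> V \<and> (a, b) \<notin> reach F} =
         {(a, b). a \<in> \<Union>(comps V F) \<and> b \<in> \<Union>(comps V F) \<and> \<not> (\<exists>D\<in>comps V F. a \<in> D \<and> b \<in> D)}"
proof -
  have cc: "comps V F = Rc F ` V" using F by (rule comps_eq)
  have U: "\<Union>(comps V F) = V"
  proof
    show "\<Union>(comps V F) \<subseteq> V" unfolding cc using Rc_sub[OF F] by blast
    show "V \<subseteq> \<Union>(comps V F)" unfolding cc using Rc_self by blast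
  qed
  have iff: "(\<exists>D\<in>comps V F. a \<in> D \<and> b \<in> D) \<longleftrightarrow> (a, b) \<in> reach F" if "a \<in> V" for a b
  proof
    assume "\<exists>D\<in>comps V F. a \<in> D \<and> b \<in> D"
    then obtain x where "a \<in> Rc F x" "b \<in> Rc F x" unfolding cc by blast
    then have "(x, a) \<in> reach F" "(x, b) \<in> reach F" by (simp_all add: Rc_def)
    then show "(a, b) \<in> reach F" using reach_sym reach_trans by blast
  next
    assume "(a, b) \<in> reach F"
    then have "a \<in> Rc F a" "b \<in> Rc F a" by (simp_all add: Rc_def)
    moreover have "Rc F a \<in> comps V F" unfolding cc using that by blast
    ultimately show "\<exists>D\<in>comps V F. a \<in> D \<and> b \<in> D" by blast
  qed
  show ?thesis
  proof (rule set_eqI)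
    fix p :: "nat \<times> nat"
    obtain a b where p: "p = (a, b)" by (cases p)
    show "p \<in> {(a, b). a \<in> V \<and> b \<in> V \<and> (a, b) \<notin> reach F} \<longleftrightarrow>
      p \<in> {(a, b). a \<in> \<Union>(comps V F) \<and> b \<in> \<Union>(comps V F) \<and> \<not> (\<exists>D\<in>comps V F. a \<in> D \<and> b \<in> D)}"
      unfolding p U using iff[of a b] by auto
  qed
qed

lemma sep_two:
  assumes "finite C" "finite D" "C \<inter> D = {}"
  shows "sep {C, D} = 2 * card C * card D"
proof -
  have "{(a, b). a \<in> \<Union>{C, D} \<and> b \<in> \<Union>{C, D} \<and> \<not> (\<exists>E\<in>{C, D}. a \<in> E \<and> b \<in> E)} = C \<times> D \<union> D \<times> C"
    using assms(3) by auto
  moreover have "card (C \<times> D \<union> D \<times> C) = card C * card D + card D * card C"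
    using assms by (subst card_Un_disjoint) (auto simp: card_cartesian_product)
  ultimately show ?thesis unfolding sep_def by simp
qed

lemma forests_empty: "forests {} p = (if p = 0 then {{}} else {})"
proof -
  have e: "edges_in {} = {}" by (simp add: edges_in_def)
  have c: "comps {} {} = {}" by (simp add: comps_empty)
  have f: "is_forest {}" by (simp add: is_forest_def)
  have "forests {} p = {F. F = {} \<and> card (comps {} F) = p}"
    unfolding forests_def e using f by blast
  also have "\<dots> = {F. F = {} \<and> p = 0}" using c by auto
  finally show ?thesis by auto
qed

lemma forests_zero: assumes "finite V" "V \<noteq> {}" shows "forests V 0 = {}"
proof -
  have "card (comps V F) \<noteq> 0" if "F \<subseteq> edges_in V" for F
    using comps_eq[OF that] assms finite_comps[OF assms(1) that] by auto
  then show ?thesis unfolding forests_def by auto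
qed

lemma cayley:
  assumes "finite V" "card V = n" "n \<ge> 1"
  shows "real (card (forests V 1)) = real n ^ (n - 2)"
  using assms
proof (induction n arbitrary: V rule: less_induct)
  case (less n)
  note V = less.prems(1)
  show ?case
  proof (cases "n = 1")
    case True
    then obtain v where v: "V = {v}" using less.prems card_1_singletonE by blast
    have "edges_in {v} = {}" by (auto simp: edges_in_def)
    moreover have "comps {v} {} = {{v}}" by (simp add: comps_empty)
    moreover have "is_forest {}" by (simp add: is_forest_def)
    ultimately have "forests V 1 = {{}}" unfolding v forests_def by auto
    then show ?thesis using True by simp
  next
    case False
    then have n2: "n \<ge> 2" using less.prems by simp
    obtain v0 where v0: "v0 \<in> V" using less.prems by fastforce
    let ?T = "forests V 1"
    let ?S1 = "Sigma ?T (\<lambda>T. {(a, b). {a, b} \<in> T})"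
    let ?S2 = "Sigma (forests V 2) (\<lambda>F. {(a, b). a \<in> V \<and> b \<in> V \<and> (a, b) \<notin> reach F})"
    have fT: "finite ?T" using finite_forests[OF V] .
    have c1: "card ?S1 = card ?T * (2 * (n - 1))"
    proof -
      have "card {(a, b). {a, b} \<in> T} = 2 * (n - 1)" if "T \<in> ?T" for T
      proof -
        have T: "T \<subseteq> edges_in V" "is_forest T" "card (comps V T) = 1" using that by (auto simp: forests_def)
        have "card T + 1 = n" using edge_count[OF V T(1,2)] T(3) less.prems(2) by simp
        moreover have "finite T" using finite_subset[OF T(1) finite_edges_in[OF V]] .
        ultimately show ?thesis using card_pairs_edges[OF T(1)] by simp
      qed
      moreover have "finite {(a, b). {a, b} \<in> T}" if "T \<in> ?T" for T
        by (rule card_ge_0_finite) (use calculation[OF that] n2 in simp)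
      ultimately have "card ?S1 = (\<Sum>T\<in>?T. card {(a, b). {a, b} \<in> T})"
        using card_SigmaI[OF fT, of "\<lambda>T. {(a, b). {a, b} \<in> T}"] by blast
      also have "\<dots> = (\<Sum>T\<in>?T. 2 * (n - 1))" using calculation by (intro sum.cong refl) (simp add: \<open>\<And>T. T \<in> ?T \<Longrightarrow> card {(a, b). {a, b} \<in> T} = 2 * (n - 1)\<close>)
      finally show ?thesis by simp
    qed
    have bij: "bij_betw (\<lambda>(T, ab). (T - {{fst ab, snd ab}}, ab)) ?S1 ?S2"
    proof (rule bij_betw_byWitness[where f' = "\<lambda>(F, ab). (insert {fst ab, snd ab} F, ab)"])
      show "\<forall>x\<in>?S1. (\<lambda>(F, ab). (insert {fst ab, snd ab} F, ab)) ((\<lambda>(T, ab). (T - {{fst ab, snd ab}}, ab)) x) = x"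
        by auto
      show "\<forall>y\<in>?S2. (\<lambda>(T, ab). (T - {{fst ab, snd ab}}, ab)) ((\<lambda>(F, ab). (insert {fst ab, snd ab} F, ab)) y) = y"
      proof
        fix y assume "y \<in> ?S2"
        then obtain F a b where y: "y = (F, (a, b))" "(a, b) \<notin> reach F" by auto
        have "{a, b} \<notin> F" using y(2) reach_edge by blast
        then show "(\<lambda>(T, ab). (T - {{fst ab, snd ab}}, ab)) ((\<lambda>(F, ab). (insert {fst ab, snd ab} F, ab)) y) = y"
          using y(1) by auto
      qed
      show "(\<lambda>(T, ab). (T - {{fst ab, snd ab}}, ab)) ` ?S1 \<subseteq> ?S2"
      proof
        fix z assume "z \<in> (\<lambda>(T, ab). (T - {{fst ab, snd ab}}, ab)) ` ?S1"
        then obtain T a b where z: "z = (T - {{a, b}}, (a, b))" "T \<in> ?T" "{a, b} \<in> T" by auto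
        have T: "T \<subseteq> edges_in V" "is_forest T" "card (comps V T) = 1" using z(2) by (auto simp: forests_def)
        have ab: "a \<in> V" "b \<in> V" using T(1) z(3) unfolding edges_in_def by (auto simp: doubleton_eq_iff)
        let ?F = "T - {{a, b}}"
        have F: "?F \<subseteq> edges_in V" using T(1) by blast
        have fF: "is_forest ?F" using is_forest_mono[OF T(2)] by blast
        have nr: "(a, b) \<notin> reach ?F" using T(2) z(3) unfolding is_forest_def by blast
        have "insert {a, b} ?F = T" using z(3) by blast
        then have "card (comps V ?F) = 2" using merge_card[OF V F ab nr] T(3) by simp
        then show "z \<in> ?S2" using z(1) F fF nr ab unfolding forests_def by simp
      qed
      show "(\<lambda>(F, ab). (insert {fst ab, snd ab} F, ab)) ` ?S2 \<subseteq> ?S1"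
      proof
        fix z assume "z \<in> (\<lambda>(F, ab). (insert {fst ab, snd ab} F, ab)) ` ?S2"
        then obtain F a b where z: "z = (insert {a, b} F, (a, b))" "F \<in> forests V 2"
          "a \<in> V" "b \<in> V" "(a, b) \<notin> reach F" by auto
        have F: "F \<subseteq> edges_in V" "is_forest F" "card (comps V F) = 2" using z(2) by (auto simp: forests_def)
        have "a \<noteq> b" using z(5) by blast
        then have G: "insert {a, b} F \<subseteq> edges_in V" using F(1) z(3,4) unfolding edges_in_def by blast
        have "card (comps V (insert {a, b} F)) = 1" using merge_card[OF V F(1) z(3,4,5)] F(3) by simp
        then show "z \<in> ?S1" using z(1) G forest_insert[OF F(2) z(5)] unfolding forests_def by simp
      qed
    qed
    have c12: "card ?S1 = card ?S2" using bij_betw_same_card[OF bij] .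
    define phi where "phi = (\<lambda>k. real k ^ (k - 2) * real (n - k) ^ (n - k - 2) * (2 * real k * real (n - k)))"
    have "real (card ?S2) = (\<Sum>F\<in>forests V 2. real (sep (comps V F)))"
    proof -
      have e: "{(a, b). a \<in> V \<and> b \<in> V \<and> (a, b) \<notin> reach F} = {(a, b). a \<in> \<Union>(comps V F) \<and> b \<in> \<Union>(comps V F) \<and> \<not> (\<exists>D\<in>comps V F. a \<in> D \<and> b \<in> D)}"
        if "F \<in> forests V 2" for F
        using pairs_comps[of F V] that by (auto simp: forests_def)
      have fin: "finite {(a, b). a \<in> V \<and> b \<in> V \<and> (a, b) \<notin> reach F}" for F
        using V by (auto intro: finite_subset[of _ "V \<times> V"])
      have "card ?S2 = (\<Sum>F\<in>forests V 2. card {(a, b). a \<in> V \<and> b \<in> V \<and> (a, b) \<notin> reach F})"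
        by (rule card_SigmaI[OF finite_forests[OF V]]) (use fin in blast)
      also have "\<dots> = (\<Sum>F\<in>forests V 2. sep (comps V F))"
        unfolding sep_def using e by (intro sum.cong refl) simp
      finally show ?thesis by simp
    qed
    also have "\<dots> = (\<Sum>C\<in>{C. v0 \<in> C \<and> C \<subseteq> V}. \<Sum>TF\<in>forests C 1 \<times> forests (V - C) 1. real (sep (insert C (comps (V - C) (snd TF)))))"
      using split_sum[OF V v0, of "\<lambda>P. real (sep P)" 1] by (simp add: numeral_2_eq_2)
    also have "\<dots> = (\<Sum>C\<in>{C. v0 \<in> C \<and> C \<subseteq> V}. real (card (forests C 1)) * real (card (forests (V - C) 1)) * (2 * real (card C) * real (card (V - C))))"
    proof (intro sum.cong refl)
      fix C assume C: "C \<in> {C. v0 \<in> C \<and> C \<subseteq> V}"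
      have "real (sep (insert C (comps (V - C) (snd TF)))) = 2 * real (card C) * real (card (V - C))"
        if "TF \<in> forests C 1 \<times> forests (V - C) 1" for TF
      proof -
        have "snd TF \<subseteq> edges_in (V - C)" "card (comps (V - C) (snd TF)) = 1"
          using that by (auto simp: forests_def)
        then have "comps (V - C) (snd TF) = {V - C}" by (rule comps_tree)
        moreover have "finite C" "finite (V - C)" using C V finite_subset by auto
        ultimately show ?thesis using sep_two[of C "V - C"] by simp
      qed
      then show "(\<Sum>TF\<in>forests C 1 \<times> forests (V - C) 1. real (sep (insert C (comps (V - C) (snd TF))))) =
          real (card (forests C 1)) * real (card (forests (V - C) 1)) * (2 * real (card C) * real (card (V - C)))"
        by (simp add: card_cartesian_product)
    qed
    also have "\<dots> = (\<Sum>C\<in>{C. v0 \<in> C \<and> C \<subseteq> V}. phi (card C))"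
    proof (intro sum.cong refl)
      fix C assume C: "C \<in> {C. v0 \<in> C \<and> C \<subseteq> V}"
      have fC: "finite C" using C V finite_subset by auto
      have cC: "card C \<ge> 1" using C fC by (auto simp: Suc_le_eq card_gt_0_iff)
      have cVC: "card (V - C) = n - card C" using C V less.prems(2) by (simp add: card_Diff_subset fC)
      show "real (card (forests C 1)) * real (card (forests (V - C) 1)) * (2 * real (card C) * real (card (V - C))) =
        phi (card C)"
      proof (cases "C = V")
        case True
        then show ?thesis using less.prems(2) by (simp add: phi_def)
      next
        case False
        then have "card C < n" using C V less.prems(2) by (metis mem_Collect_eq psubsetI psubset_card_mono)
        moreover have "card (V - C) \<ge> 1" using False C V by (simp add: Suc_le_eq card_gt_0_iff) blast
        ultimately show ?thesis
          using less.IH[of "card C" C] less.IH[of "card (V - C)" "V - C"] fC cC cVC V by (simp add: phi_def)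
      qed
    qed
    also have "\<dots> = (\<Sum>k=1..n. real ((n - 1) choose (k - 1)) * phi k)"
      using count_subsets[OF V v0, of phi] less.prems(2) by simp
    also have "\<dots> = 2 * (\<Sum>k=1..n. real ((n - 1) choose (k - 1)) * (fact k * Rf $ k) * (fact (n - k) * Rf $ (n - k)))"
      unfolding sum_distrib_left phi_def
      by (intro sum.cong refl) (simp add: Rf_nth)
    also have "\<dots> = 2 * (real (n - 1) * real n ^ (n - 2))" using cay_sum[OF n2] by simp
    finally have A: "real (card ?S2) = 2 * (real (n - 1) * real n ^ (n - 2))" .
    have "real (card ?S2) = real (card ?T) * (2 * real (n - 1))"
      unfolding c12[symmetric] c1 by simp
    then have "real (card ?T) * (2 * real (n - 1)) = real n ^ (n - 2) * (2 * real (n - 1))"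
      using A by (simp only: mult.commute mult.left_commute)
    moreover have "2 * real (n - 1) \<noteq> 0" using n2 by simp
    ultimately show ?thesis by (metis mult_right_cancel)
  qed
qed

lemma main_count:
  assumes "finite V" "card V = n"
  shows "real (card (forests V p)) = fact n / fact p * (Tf ^ p) $ n"
  using assms
proof (induction n arbitrary: V p rule: less_induct)
  case (less n)
  note V = less.prems(1)
  show ?case
  proof (cases "n = 0")
    case True
    then have "V = {}" using less.prems by simp
    then show ?thesis using True by (cases p) (simp_all add: forests_empty startsby_zero_power)
  next
    case False
    then obtain v0 where v0: "v0 \<in> V" using less.prems by fastforce
    show ?thesis
    proof (cases p)
      case 0
      have "V \<noteq> {}" using v0 by blast
      then have "forests V 0 = {}" using forests_zero[OF V] by blast
      then show ?thesis using 0 False by simp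
    next
      case (Suc q)
      let ?I = "{C. v0 \<in> C \<and> C \<subseteq> V}"
      define psi where "psi = (\<lambda>k. real k ^ (k - 2) * (fact (n - k) / fact q * (Tf ^ q) $ (n - k)))"
      have "real (card (forests V (Suc q))) = (\<Sum>F\<in>forests V (Suc q). (\<lambda>_. 1::real) (comps V F))"
        by simp
      also have "\<dots> = (\<Sum>C\<in>?I. \<Sum>TF\<in>forests C 1 \<times> forests (V - C) q. (1::real))"
        using split_sum[OF V v0, of "\<lambda>_. 1" q] by simp
      also have "\<dots> = (\<Sum>C\<in>?I. real (card (forests C 1)) * real (card (forests (V - C) q)))"
        by (simp add: card_cartesian_product)
      also have "\<dots> = (\<Sum>C\<in>?I. psi (card C))"
      proof (intro sum.cong refl)
        fix C assume C: "C \<in> ?I"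
        have fC: "finite C" using C V finite_subset by auto
        have cC: "card C \<ge> 1" using C fC by (auto simp: Suc_le_eq card_gt_0_iff)
        have cVC: "card (V - C) = n - card C" using C V less.prems(2) by (simp add: card_Diff_subset fC)
        have lt: "n - card C < n" using cC False by simp
        show "real (card (forests C 1)) * real (card (forests (V - C) q)) = psi (card C)"
          using cayley[OF fC refl cC] less.IH[OF lt, of "V - C" q] V cVC by (simp add: psi_def)
      qed
      also have "\<dots> = (\<Sum>k=1..n. real ((n - 1) choose (k - 1)) * psi k)"
        using count_subsets[OF V v0, of psi] less.prems(2) by simp
      also have "\<dots> = (\<Sum>k=1..n. real ((n - 1) choose (k - 1)) * (fact k * Tf $ k) * (fact (n - k) / fact q * (Tf ^ q) $ (n - k)))"
        unfolding psi_def by (intro sum.cong refl) (simp add: Tf_nth)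
      also have "\<dots> = fact n / fact (Suc q) * (Tf ^ Suc q) $ n"
        using tf_rec[of n q] False by simp
      finally show ?thesis using Suc by simp
    qed
  qed
qed

theorem mainTheorem13:
  fixes n :: nat and lambda :: real
  assumes "n \<ge> 1" and "lambda > 0"
  shows "(\<Sum>p\<le>n. real (u_e2 n p) * lambda ^ p) =
           sqrt lambda ^ n *
             (hermiteHe n (sqrt lambda + real n / sqrt lambda)
              - real n / sqrt lambda * hermiteHe (n - 1) (sqrt lambda + real n / sqrt lambda))
         \<and> (\<forall>p. real (u_e2 n p) =
              (1 / fact p) * (\<Sum>q\<le>p. (- 1 / 2) ^ q * real (p choose q)
                 * real (if p + q = 0 then 0 else (n - 1) choose (p + q - 1))
                 * real n ^ (n - p - q) * fact (p + q)))"
proof -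
  have u: "real (u_e2 n p) = fact n / fact p * (Tf ^ p) $ n" for p
    using main_count[of "{0..<n}" n p] by (simp add: u_e2_forests)
  have "(\<Sum>p\<le>n. real (u_e2 n p) * lambda ^ p) = fact n * (fps_exp lambda oo Tf) $ n"
    unfolding fps_compose_nth u atMost_atLeast0 sum_distrib_left
    by (intro sum.cong refl) simp
  also have "\<dots> = sqrt lambda ^ n *
             (hermiteHe n (sqrt lambda + real n / sqrt lambda)
              - real n / sqrt lambda * hermiteHe (n - 1) (sqrt lambda + real n / sqrt lambda))"
    by (rule herm[OF assms])
  finally show ?thesis using u coef_formula[OF assms(1)] by simp
qed


end
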